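(* Let $d\ge 1$ be an integer and let $G$ be a triangle-free graph on $n$ vertices with maximum degree $d$. Then for every $\lambda>0$, \[ \frac{1}{n}\overline{\alpha}_G(\lambda) \;\ge\; \frac{\lambda}{1+\lambda}\cdot\frac{W(d\log(1+\lambda))}{d\log(1+\lambda)}. \]
   Context: For a graph $G$ with set of independent sets $\mathcal I(G)$ and a fugacity $\lambda>0$, the hard-core model is the probability distribution on $\mathcal I(G)$ given by $\Pr[I]=\lambda^{|I|}/P_G(\lambda)$, where $P_G(\lambda)=\sum_{J\in\mathcal I(G)}\lambda^{|J|}$ is the partition function (independence polynomial). $\overline{\alpha}_G(\lambda)=\sum_{I\in\mathcal I(G)}|I|\Pr[I]=\lambda P_G'(\lambda)/P_G(\lambda)$ is the expected size of the random independent set, and $\frac1n\overline\alpha_G(\lambda)$ is the occupancy fraction. For $z>0$, $W(z)$ (the Lambert $W$ function) denotes the unique positive real with $W(z)e^{W(z)}=z$. Logarithms are natural. *)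

theory Defs
  imports "HOL-Analysis.Analysis"
begin

text \<open>Simple graphs: a finite vertex set V with a symmetric, irreflexive
  adjacency relation E (only its restriction to V matters).\<close>

definition simple_graph :: "'a set \<Rightarrow> ('a \<Rightarrow> 'a \<Rightarrow> bool) \<Rightarrow> bool" where
  "simple_graph V E \<longleftrightarrow> finite V \<and> (\<forall>u\<in>V. \<forall>v\<in>V. E u v \<longrightarrow> E v u) \<and> (\<forall>v\<in>V. \<not> E v v)"

definition degree :: "'a set \<Rightarrow> ('a \<Rightarrow> 'a \<Rightarrow> bool) \<Rightarrow> 'a \<Rightarrow> nat" where
  "degree V E v = card {u\<in>V. E v u}"

definition max_degree :: "'a set \<Rightarrow> ('a \<Rightarrow> 'a \<Rightarrow> bool) \<Rightarrow> nat" where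
  "max_degree V E = Max (degree V E ` V)"

definition triangle_free :: "'a set \<Rightarrow> ('a \<Rightarrow> 'a \<Rightarrow> bool) \<Rightarrow> bool" where
  "triangle_free V E \<longleftrightarrow> \<not> (\<exists>u\<in>V. \<exists>v\<in>V. \<exists>w\<in>V. E u v \<and> E v w \<and> E u w)"

definition independent_sets :: "'a set \<Rightarrow> ('a \<Rightarrow> 'a \<Rightarrow> bool) \<Rightarrow> 'a set set" where
  "independent_sets V E = {I. I \<subseteq> V \<and> (\<forall>u\<in>I. \<forall>v\<in>I. \<not> E u v)}"

definition partition_fn :: "'a set \<Rightarrow> ('a \<Rightarrow> 'a \<Rightarrow> bool) \<Rightarrow> real \<Rightarrow> real" where
  "partition_fn V E lam = (\<Sum>I\<in>independent_sets V E. lam ^ card I)"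

definition expected_size :: "'a set \<Rightarrow> ('a \<Rightarrow> 'a \<Rightarrow> bool) \<Rightarrow> real \<Rightarrow> real" where
  "expected_size V E lam =
     (\<Sum>I\<in>independent_sets V E. real (card I) * (lam ^ card I / partition_fn V E lam))"

definition lambertW :: "real \<Rightarrow> real" where
  "lambertW z = (THE w. w > 0 \<and> w * exp w = z)"

end

theory Submission
  imports Defs
begin

lemma lambertW_props:
  assumes z: "z > 0"
  shows "lambertW z > 0 \<and> lambertW z * exp (lambertW z) = z"
proof -
  have mono: "a * exp a < b * exp b" if "0 < a" "a < b" for a b :: real
    using that by (intro mult_strict_mono) auto
  have "\<exists>x. 0 \<le> x \<and> x \<le> z \<and> (\<lambda>x. x * exp x) x = z"
  proof (rule IVT)
    show "(\<lambda>x. x * exp x) 0 \<le> z" using z by simp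
    show "z \<le> (\<lambda>x. x * exp x) z" using z by simp
  qed (use z in \<open>auto intro!: continuous_intros\<close>)
  then obtain x where x: "0 \<le> x" "x * exp x = z" by auto
  with z have xp: "x > 0" by (cases "x = 0") auto
  have "lambertW z = x"
    unfolding lambertW_def
  proof (rule the_equality)
    show "0 < x \<and> x * exp x = z" using xp x by auto
    fix y assume y: "0 < y \<and> y * exp y = z"
    show "y = x"
    proof (rule ccontr)
      assume "y \<noteq> x"
      then consider "y < x" | "x < y" by linarith
      then show False using mono[of y x] mono[of x y] y xp x by cases auto
    qed
  qed
  then show ?thesis using xp x by simp
qed

locale hc =
  fixes V :: "'a set" and E :: "'a \<Rightarrow> 'a \<Rightarrow> bool" and lam :: real
  assumes sg: "simple_graph V E" and lam: "lam > 0"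
begin

lemma finV: "finite V" using sg by (simp add: simple_graph_def)
lemma symE: "u \<in> V \<Longrightarrow> v \<in> V \<Longrightarrow> E u v \<Longrightarrow> E v u" using sg by (simp add: simple_graph_def)
lemma irrE: "v \<in> V \<Longrightarrow> \<not> E v v" using sg by (simp add: simple_graph_def)

lemma fin_Ind: "finite (independent_sets V E)"
  by (rule finite_subset[of _ "Pow V"]) (auto simp: independent_sets_def finV)

lemma Ind_sub: "I \<in> independent_sets V E \<Longrightarrow> I \<subseteq> V"
  by (simp add: independent_sets_def)
lemma Ind_fin: "I \<in> independent_sets V E \<Longrightarrow> finite I"
  using Ind_sub finV finite_subset by blast
lemma Ind_ind: "I \<in> independent_sets V E \<Longrightarrow> u \<in> I \<Longrightarrow> x \<in> I \<Longrightarrow> \<not> E u x"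
  by (simp add: independent_sets_def)

definition T where "T u = (\<Sum>I\<in>{I\<in>independent_sets V E. \<forall>x\<in>I. \<not> E u x}. lam ^ card I)"
definition A where "A u = (\<Sum>I\<in>{I\<in>independent_sets V E. u \<in> I}. lam ^ card I)"

lemma pair:
  assumes u: "u \<in> V"
  shows "A u = lam / (1 + lam) * T u"
proof -
  define B0 where "B0 = {I\<in>independent_sets V E. u \<notin> I \<and> (\<forall>x\<in>I. \<not> E u x)}"
  define B1 where "B1 = {I\<in>independent_sets V E. u \<in> I}"
  have fB0: "finite B0" "finite B1" unfolding B0_def B1_def using fin_Ind by auto
  have split: "{I\<in>independent_sets V E. \<forall>x\<in>I. \<not> E u x} = B0 \<union> B1"
    unfolding B0_def B1_def using Ind_ind by blast
  have disj: "B0 \<inter> B1 = {}" unfolding B0_def B1_def by blast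
  have T: "T u = sum (\<lambda>I. lam ^ card I) B0 + A u"
    unfolding T_def split A_def B1_def[symmetric]
    by (rule sum.union_disjoint) (use fB0 disj in auto)
  have bij: "bij_betw (insert u) B0 B1"
  proof (rule bij_betw_byWitness[where f' = "\<lambda>J. J - {u}"])
    show "\<forall>a\<in>B0. insert u a - {u} = a" unfolding B0_def by auto
    show "\<forall>a'\<in>B1. insert u (a' - {u}) = a'" unfolding B1_def by auto
    show "insert u ` B0 \<subseteq> B1"
    proof
      fix J assume "J \<in> insert u ` B0"
      then obtain I where I: "I \<in> B0" "J = insert u I" by auto
      have "I \<subseteq> V" using I Ind_sub unfolding B0_def by auto
      have Iind: "I \<in> independent_sets V E" "\<forall>x\<in>I. \<not> E u x" using I unfolding B0_def by auto
      have "\<forall>a\<in>J. \<forall>b\<in>J. \<not> E a b"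
      proof (intro ballI)
        fix a b assume a: "a \<in> J" and b: "b \<in> J"
        show "\<not> E a b"
        proof (cases "a = u")
          case True
          have "b = u \<or> b \<in> I" using b I(2) by blast
          then show ?thesis using True Iind(2) irrE[OF u] by blast
        next
          case False
          then have aI: "a \<in> I" using a I(2) by auto
          show ?thesis
          proof (cases "b = u")
            case True
            have "a \<in> V" using aI \<open>I \<subseteq> V\<close> by blast
            then show ?thesis using True aI Iind(2) symE[of a u] u by blast
          next
            case False
            then have "b \<in> I" using b I(2) by blast
            then show ?thesis using aI Ind_ind[OF Iind(1)] by blast
          qed
        qed
      qed
      moreover have "J \<subseteq> V" using I(2) u \<open>I \<subseteq> V\<close> by blast
      ultimately show "J \<in> B1" using I(2) unfolding B1_def independent_sets_def by blast
    qed
    show "(\<lambda>J. J - {u}) ` B1 \<subseteq> B0"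
    proof
      fix K assume "K \<in> (\<lambda>J. J - {u}) ` B1"
      then obtain J where J: "J \<in> independent_sets V E" "u \<in> J" "K = J - {u}" unfolding B1_def by blast
      have "\<forall>x\<in>K. \<not> E u x" using J Ind_ind[OF J(1)] by blast
      moreover have "K \<in> independent_sets V E" using J unfolding independent_sets_def by blast
      ultimately show "K \<in> B0" using J(3) unfolding B0_def by blast
    qed
  qed
  have "A u = sum (\<lambda>I. lam ^ card (insert u I)) B0"
    unfolding A_def B1_def[symmetric] using sum.reindex_bij_betw[OF bij, of "\<lambda>I. lam ^ card I"] by simp
  also have "\<dots> = lam * sum (\<lambda>I. lam ^ card I) B0"
    unfolding sum_distrib_left
    by (rule sum.cong) (auto simp: B0_def Ind_fin)
  finally have "A u = lam * sum (\<lambda>I. lam ^ card I) B0" .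
  with T lam show ?thesis by (simp add: field_simps)
qed


lemma swap_count:
  assumes "finite X" "finite N"
  shows "(\<Sum>I\<in>X. f I * real (card {u\<in>N. Q u I})) = (\<Sum>u\<in>N. \<Sum>I\<in>{I\<in>X. Q u I}. f I)"
proof -
  have "(\<Sum>I\<in>X. f I * real (card {u\<in>N. Q u I})) = (\<Sum>I\<in>X. \<Sum>u\<in>N. if Q u I then f I else 0)"
  proof (rule sum.cong)
    fix I assume "I \<in> X"
    have "(\<Sum>u\<in>N. if Q u I then f I else 0) = (\<Sum>u\<in>{u\<in>N. Q u I}. f I)"
      using assms(2) by (simp add: sum.inter_filter[symmetric])
    then show "f I * real (card {u\<in>N. Q u I}) = (\<Sum>u\<in>N. if Q u I then f I else 0)" by simp
  qed simp
  also have "\<dots> = (\<Sum>u\<in>N. \<Sum>I\<in>X. if Q u I then f I else 0)" by (rule sum.swap)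
  also have "\<dots> = (\<Sum>u\<in>N. \<Sum>I\<in>{I\<in>X. Q u I}. f I)"
    using assms(1) by (simp add: sum.inter_filter)
  finally show ?thesis .
qed

lemma factB:
  "(\<Sum>I\<in>independent_sets V E. lam ^ card I * real (card {u\<in>V. E v u \<and> u \<in> I}))
   = lam / (1 + lam) * (\<Sum>I\<in>independent_sets V E. lam ^ card I * real (card {u\<in>V. E v u \<and> (\<forall>x\<in>I. \<not> E u x)}))"
proof -
  define N where "N = {u\<in>V. E v u}"
  have fN: "finite N" unfolding N_def using finV by simp
  have 1: "(\<Sum>I\<in>independent_sets V E. lam ^ card I * real (card {u\<in>V. E v u \<and> u \<in> I})) = (\<Sum>u\<in>N. A u)"
    using swap_count[OF fin_Ind fN, of "\<lambda>I. lam ^ card I" "\<lambda>u I. u \<in> I"] unfolding A_def N_def by simp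
  have 2: "(\<Sum>I\<in>independent_sets V E. lam ^ card I * real (card {u\<in>V. E v u \<and> (\<forall>x\<in>I. \<not> E u x)})) = (\<Sum>u\<in>N. T u)"
    using swap_count[OF fin_Ind fN, of "\<lambda>I. lam ^ card I" "\<lambda>u I. \<forall>x\<in>I. \<not> E u x"] unfolding T_def N_def by simp
  have "(\<Sum>u\<in>N. A u) = (\<Sum>u\<in>N. lam / (1 + lam) * T u)"
    by (rule sum.cong) (auto simp: N_def pair)
  then show ?thesis unfolding 1 2 by (simp add: sum_distrib_left)
qed

lemma sum_pow_Pow: "finite S \<Longrightarrow> (\<Sum>X\<in>Pow S. lam ^ card X) = (1 + lam) ^ card S"
  using prod_add[of S "\<lambda>_. lam" "\<lambda>_. 1"] by (simp add: add.commute)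

lemma factA:
  assumes tf: "triangle_free V E" and v: "v \<in> V"
  shows "T v = (\<Sum>I\<in>independent_sets V E. lam ^ card I * inverse (1 + lam) ^ card {u\<in>V. E v u \<and> (\<forall>x\<in>I. \<not> E u x)})"
proof -
  define N where "N = {u\<in>V. E v u}"
  define D where "D = {K\<in>independent_sets V E. \<forall>x\<in>K. \<not> E v x}"
  define U where "U K = {u\<in>V. E v u \<and> (\<forall>x\<in>K. \<not> E u x)}" for K
  define q where "q = inverse (1 + lam)"
  define g where "g I = lam ^ card I * q ^ card (U I)" for I
  have notri: "\<not> (E v a \<and> E a b \<and> E v b)" if "a \<in> V" "b \<in> V" for a b
    using tf v that unfolding triangle_free_def by blast
  have fD: "finite D" unfolding D_def using fin_Ind by simp
  have img: "(\<lambda>I. I - N) ` independent_sets V E \<subseteq> D"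
  proof
    fix K assume "K \<in> (\<lambda>I. I - N) ` independent_sets V E"
    then obtain I where I: "I \<in> independent_sets V E" "K = I - N" by blast
    have "K \<in> independent_sets V E" using I unfolding independent_sets_def by blast
    moreover have "\<forall>x\<in>K. \<not> E v x" using I Ind_sub[OF I(1)] unfolding N_def by blast
    ultimately show "K \<in> D" unfolding D_def by blast
  qed
  have grp: "(\<Sum>K\<in>D. \<Sum>I\<in>{I. I \<in> independent_sets V E \<and> I - N = K}. g I) = (\<Sum>I\<in>independent_sets V E. g I)"
    by (rule sum.group[OF fin_Ind fD img])
  have inner: "(\<Sum>I\<in>{I. I \<in> independent_sets V E \<and> I - N = K}. g I) = lam ^ card K" if K: "K \<in> D" for K
  proof -
    have KI: "K \<in> independent_sets V E" and KN: "\<forall>x\<in>K. \<not> E v x" using K unfolding D_def by auto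
    have KV: "K \<subseteq> V" using Ind_sub[OF KI] .
    have fK: "finite K" using Ind_fin[OF KI] .
    have UN: "U K \<subseteq> N" unfolding U_def N_def by blast
    have fU: "finite (U K)" using finV unfolding U_def by simp
    have KUd: "K \<inter> U K = {}" using KN unfolding U_def by blast
    have Ueq: "U (K \<union> S) = U K" if "S \<subseteq> U K" for S
    proof -
      have "\<not> E u x" if "u \<in> V" "E v u" "x \<in> S" for u x
      proof -
        have "x \<in> V" "E v x" using \<open>S \<subseteq> U K\<close> \<open>x \<in> S\<close> unfolding U_def by auto
        then show ?thesis using notri[of u x] that by blast
      qed
      then show ?thesis unfolding U_def by blast
    qed
    have seteq: "{I. I \<in> independent_sets V E \<and> I - N = K} = (\<lambda>S. K \<union> S) ` Pow (U K)"
    proof (intro equalityI subsetI)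
      fix I assume "I \<in> {I. I \<in> independent_sets V E \<and> I - N = K}"
      then have I: "I \<in> independent_sets V E" "I - N = K" by auto
      have "I \<inter> N \<subseteq> U K"
      proof
        fix u assume u: "u \<in> I \<inter> N"
        have "\<forall>x\<in>K. \<not> E u x" using I u Ind_ind[OF I(1)] by blast
        then show "u \<in> U K" using u unfolding U_def N_def by blast
      qed
      moreover have "I = K \<union> (I \<inter> N)" using I by blast
      ultimately show "I \<in> (\<lambda>S. K \<union> S) ` Pow (U K)" by blast
    next
      fix I assume "I \<in> (\<lambda>S. K \<union> S) ` Pow (U K)"
      then obtain S where S: "S \<subseteq> U K" "I = K \<union> S" by blast
      have SV: "S \<subseteq> V" and SN: "\<forall>x\<in>S. E v x" and SK: "\<forall>x\<in>S. \<forall>y\<in>K. \<not> E x y"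
        using S(1) unfolding U_def by auto
      have ind: "\<forall>a\<in>I. \<forall>b\<in>I. \<not> E a b"
      proof (intro ballI)
        fix a b assume a: "a \<in> I" and b: "b \<in> I"
        consider "a \<in> K" "b \<in> K" | "a \<in> S" "b \<in> S" | "a \<in> S" "b \<in> K" | "a \<in> K" "b \<in> S"
          using a b S(2) by blast
        then show "\<not> E a b"
        proof cases
          case 1 then show ?thesis using Ind_ind[OF KI] by blast
        next
          case 2 then show ?thesis using notri[of a b] SV SN by blast
        next
          case 3 then show ?thesis using SK by blast
        next
          case 4
          then have "a \<in> V" "b \<in> V" using KV SV by auto
          then show ?thesis using symE[of a b] SK 4 by blast
        qed
      qed
      have "I \<in> independent_sets V E" using ind KV SV S(2) unfolding independent_sets_def by blast
      moreover have "I - N = K" using S UN KN unfolding N_def by blast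
      ultimately show "I \<in> {I. I \<in> independent_sets V E \<and> I - N = K}" by blast
    qed
    have inj: "inj_on (\<lambda>S. K \<union> S) (Pow (U K))"
    proof (rule inj_onI)
      fix S1 S2 assume "S1 \<in> Pow (U K)" "S2 \<in> Pow (U K)" "K \<union> S1 = K \<union> S2"
      then show "S1 = S2" using KUd by blast
    qed
    have "(\<Sum>I\<in>{I. I \<in> independent_sets V E \<and> I - N = K}. g I) = (\<Sum>S\<in>Pow (U K). g (K \<union> S))"
      unfolding seteq by (rule sum.reindex[OF inj, unfolded comp_def])
    also have "\<dots> = (\<Sum>S\<in>Pow (U K). lam ^ card K * q ^ card (U K) * lam ^ card S)"
    proof (rule sum.cong)
      fix S assume S: "S \<in> Pow (U K)"
      have fS: "finite S" using S fU finite_subset by blast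
      have "card (K \<union> S) = card K + card S"
        using S KUd fK fS by (intro card_Un_disjoint) auto
      then show "g (K \<union> S) = lam ^ card K * q ^ card (U K) * lam ^ card S"
        using Ueq S unfolding g_def by (simp add: power_add)
    qed simp
    also have "\<dots> = lam ^ card K * q ^ card (U K) * (1 + lam) ^ card (U K)"
      by (simp add: sum_distrib_left[symmetric] sum_pow_Pow[OF fU])
    also have "\<dots> = lam ^ card K"
      using lam unfolding q_def by (simp add: power_inverse[symmetric] field_simps)
    finally show ?thesis .
  qed
  have "T v = (\<Sum>K\<in>D. lam ^ card K)" unfolding T_def D_def ..
  also have "\<dots> = (\<Sum>K\<in>D. \<Sum>I\<in>{I. I \<in> independent_sets V E \<and> I - N = K}. g I)"
    by (rule sum.cong) (auto simp: inner)
  also have "\<dots> = (\<Sum>I\<in>independent_sets V E. g I)" by (rule grp)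
  finally show ?thesis unfolding g_def q_def U_def .
qed


lemma sum_lin: "(\<Sum>x\<in>X. a * f x - b * g x) = a * sum f X - b * sum g X" for a b :: real
  unfolding sum_subtractf sum_distrib_left by simp

lemma main:
  assumes tf: "triangle_free V E" and Vne: "V \<noteq> {}" and d: "d \<ge> 1" and md: "max_degree V E = d"
  shows "expected_size V E lam / real (card V)
           \<ge> lam / (1 + lam) * (lambertW (real d * ln (1 + lam)) / (real d * ln (1 + lam)))"
proof -
  define Ind where "Ind = independent_sets V E"
  define w where "w I = lam ^ card I" for I :: "'a set"
  define P where "P = partition_fn V E lam"
  define M where "M = (\<Sum>I\<in>Ind. w I * real (card I))"
  define c where "c = lam / (1 + lam)"
  define L where "L = ln (1 + lam)"
  define W where "W = lambertW (real d * L)"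
  define e where "e = exp (- W)"
  define q where "q = inverse (1 + lam)"
  define Y where "Y v I = card {u\<in>V. E v u \<and> (\<forall>x\<in>I. \<not> E u x)}" for v I
  define n where "n = real (card V)"
  have fI: "finite Ind" unfolding Ind_def by (rule fin_Ind)
  have Lpos: "L > 0" unfolding L_def using lam by simp
  have dL: "real d * L > 0" using d Lpos by simp
  have Wp: "W > 0" and WeW: "W * exp W = real d * L"
    using lambertW_props[OF dL] unfolding W_def by auto
  have epos: "e > 0" unfolding e_def by simp
  have eW: "e * exp W = 1" unfolding e_def by (simp add: exp_minus)
  have eLd: "e * L * real d = W"
  proof -
    have "e * L * real d = e * (W * exp W)" using WeW by (simp add: algebra_simps)
    also have "\<dots> = W" using eW by (simp add: algebra_simps)
    finally show ?thesis .
  qed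
  have Wfrac: "W / (real d * L) = e"
  proof -
    have "W / (real d * L) = (e * (real d * L)) / (real d * L)" using eLd by (simp add: algebra_simps)
    also have "\<dots> = e" by (rule nonzero_mult_div_cancel_right) (use dL in linarith)
    finally show ?thesis .
  qed
  have npos: "n > 0" unfolding n_def using Vne finV by (simp add: card_gt_0_iff)
  have cpos: "c > 0" unfolding c_def using lam by simp
  have wpos: "w I > 0" for I unfolding w_def using lam by simp
  have P1: "P \<ge> 1"
  proof -
    have "{} \<in> Ind" unfolding Ind_def independent_sets_def by simp
    then have "w {} \<le> sum w Ind" using fI wpos by (intro member_le_sum) (auto intro: less_imp_le)
    then show ?thesis unfolding P_def partition_fn_def Ind_def w_def by simp
  qed
  have ES: "expected_size V E lam = M / P"
    unfolding expected_size_def M_def P_def Ind_def w_def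
    by (simp add: sum_divide_distrib mult.commute)
  have SA: "(\<Sum>v\<in>V. A v) = M"
  proof -
    have "(\<Sum>I\<in>Ind. w I * real (card {u\<in>V. u \<in> I})) = (\<Sum>v\<in>V. A v)"
      using swap_count[OF fI finV, of w "\<lambda>u I. u \<in> I"] unfolding A_def Ind_def w_def by simp
    moreover have "(\<Sum>I\<in>Ind. w I * real (card {u\<in>V. u \<in> I})) = M"
      unfolding M_def
    proof (rule sum.cong)
      fix I assume "I \<in> Ind"
      then have "{u\<in>V. u \<in> I} = I" using Ind_sub unfolding Ind_def by blast
      then show "w I * real (card {u\<in>V. u \<in> I}) = w I * real (card I)" by simp
    qed simp
    ultimately show ?thesis by simp
  qed
  define S1 where "S1 = (\<Sum>v\<in>V. \<Sum>I\<in>Ind. w I * q ^ Y v I)"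
  define S2 where "S2 = (\<Sum>v\<in>V. \<Sum>I\<in>Ind. w I * real (Y v I))"
  define S3 where "S3 = (\<Sum>v\<in>V. \<Sum>I\<in>Ind. w I * real (card {u\<in>V. E v u \<and> u \<in> I}))"
  have MS1: "M = c * S1"
  proof -
    have "(\<Sum>v\<in>V. A v) = (\<Sum>v\<in>V. c * (\<Sum>I\<in>Ind. w I * q ^ Y v I))"
    proof (rule sum.cong)
      fix v assume v: "v \<in> V"
      show "A v = c * (\<Sum>I\<in>Ind. w I * q ^ Y v I)"
        using pair[OF v] factA[OF tf v] unfolding c_def Ind_def w_def q_def Y_def by simp
    qed simp
    then show ?thesis using SA unfolding S1_def by (simp add: sum_distrib_left)
  qed
  have S3S2: "S3 = c * S2"
  proof -
    have "S3 = (\<Sum>v\<in>V. c * (\<Sum>I\<in>Ind. w I * real (Y v I)))"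
      unfolding S3_def by (rule sum.cong) (simp_all add: factB c_def Ind_def w_def Y_def)
    then show ?thesis unfolding S2_def by (simp add: sum_distrib_left[symmetric])
  qed
  have S3M: "S3 \<le> real d * M"
  proof -
    have deg: "real (card {v\<in>V. E v u}) \<le> real d" if u: "u \<in> V" for u
    proof -
      have "{v\<in>V. E v u} = {v\<in>V. E u v}" using symE u by blast
      moreover have "degree V E u \<le> max_degree V E"
        unfolding max_degree_def using u finV by (intro Max_ge) auto
      ultimately show ?thesis using md unfolding degree_def by simp
    qed
    have per: "(\<Sum>v\<in>V. real (card {u\<in>V. E v u \<and> u \<in> I})) \<le> real d * real (card I)"
      if I: "I \<in> Ind" for I
    proof -
      have "(\<Sum>v\<in>V. 1 * real (card {u\<in>V. E v u \<and> u \<in> I}))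
          = (\<Sum>u\<in>V. \<Sum>v\<in>{v\<in>V. E v u \<and> u \<in> I}. 1)"
        by (rule swap_count[OF finV finV])
      also have "\<dots> \<le> (\<Sum>u\<in>V. if u \<in> I then real d else 0)"
      proof (rule sum_mono)
        fix u assume u: "u \<in> V"
        show "(\<Sum>v\<in>{v\<in>V. E v u \<and> u \<in> I}. 1) \<le> (if u \<in> I then real d else 0)"
          using deg[OF u] by auto
      qed
      also have "\<dots> = real d * real (card {u\<in>V. u \<in> I})"
        using finV by (simp add: sum.inter_filter[symmetric])
      also have "{u\<in>V. u \<in> I} = I" using I Ind_sub unfolding Ind_def by blast
      finally show ?thesis by simp
    qed
    have "S3 = (\<Sum>I\<in>Ind. w I * (\<Sum>v\<in>V. real (card {u\<in>V. E v u \<and> u \<in> I})))"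
      unfolding S3_def sum_distrib_left by (rule sum.swap)
    also have "\<dots> \<le> (\<Sum>I\<in>Ind. w I * (real d * real (card I)))"
      by (rule sum_mono) (use per wpos in \<open>auto intro: mult_left_mono less_imp_le\<close>)
    also have "\<dots> = real d * M" unfolding M_def sum_distrib_left by (simp add: algebra_simps)
    finally show ?thesis .
  qed
  have tang: "q ^ k \<ge> e * (1 + W) - e * L * real k" for k
  proof -
    have "(1 + lam) ^ k = exp (real k * L)" unfolding L_def using lam by (simp add: exp_of_nat_mult)
    then have "q ^ k = exp (- (real k * L))" unfolding q_def by (simp add: power_inverse exp_minus)
    also have "\<dots> = e * exp (W - real k * L)" unfolding e_def by (simp add: exp_add[symmetric])
    also have "\<dots> \<ge> e * (1 + (W - real k * L))"
      using epos by (intro mult_left_mono) (auto simp del: exp_ge_add_one_self intro: exp_ge_add_one_self)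
    finally show ?thesis by (simp add: algebra_simps)
  qed
  have S1low: "S1 \<ge> e * (1 + W) * (n * P) - e * L * S2"
  proof -
    have "(\<Sum>v\<in>V. \<Sum>I\<in>Ind. w I * q ^ Y v I) \<ge> (\<Sum>v\<in>V. \<Sum>I\<in>Ind. e * (1 + W) * w I - e * L * (w I * real (Y v I)))"
    proof (intro sum_mono)
      fix v I
      have "w I * q ^ Y v I \<ge> w I * (e * (1 + W) - e * L * real (Y v I))"
        using tang wpos by (intro mult_left_mono) (auto intro: less_imp_le)
      then show "e * (1 + W) * w I - e * L * (w I * real (Y v I)) \<le> w I * q ^ Y v I"
        by (simp add: algebra_simps)
    qed
    also have "(\<Sum>v\<in>V. \<Sum>I\<in>Ind. e * (1 + W) * w I - e * L * (w I * real (Y v I)))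
       = e * (1 + W) * (n * P) - e * L * S2"
      unfolding sum_lin S2_def
      by (simp add: n_def P_def partition_fn_def Ind_def w_def sum_lin)
    finally show ?thesis unfolding S1_def .
  qed
  have key: "M \<ge> c * e * (1 + W) * (n * P) - W * M"
  proof -
    have "M \<ge> c * (e * (1 + W) * (n * P) - e * L * S2)"
      using MS1 S1low cpos by (simp add: mult_left_mono)
    moreover have "e * L * (c * S2) \<le> e * L * (real d * M)"
      using S3M S3S2 epos Lpos by (intro mult_left_mono) auto
    moreover have "e * L * (real d * M) = W * M"
      using eLd by (metis mult.assoc)
    moreover have "c * (e * (1 + W) * (n * P) - e * L * S2) = c * e * (1 + W) * (n * P) - e * L * (c * S2)"
      by (simp add: algebra_simps)
    ultimately show ?thesis by linarith
  qed
  have "M * (1 + W) \<ge> (c * e * n * P) * (1 + W)" using key by (simp add: algebra_simps)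
  then have Mge: "M \<ge> c * e * n * P" using Wp by simp
  have "M / P / n \<ge> c * e"
    using Mge P1 npos by (simp add: field_simps)
  then show ?thesis unfolding ES using Wfrac unfolding c_def L_def W_def n_def by simp
qed

end

theorem theorem1p4:
  fixes V :: "'a set" and E :: "'a \<Rightarrow> 'a \<Rightarrow> bool" and d :: nat and lam :: real
  assumes "simple_graph V E"
    and "V \<noteq> {}"
    and "triangle_free V E"
    and "d \<ge> 1"
    and "max_degree V E = d"
    and "lam > 0"
  shows "expected_size V E lam / real (card V)
           \<ge> lam / (1 + lam) * (lambertW (real d * ln (1 + lam)) / (real d * ln (1 + lam)))"
proof -
  interpret hc V E lam using assms(1,6) by unfold_locales
  show ?thesis using main assms(2-5) by blast
qed

end
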